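(* Let $G$ be a bounded-length, turn-based Dec-POMDP. Applying OBL with temperature $0$ to any constant policy $\pi_0(a\mid\tau^i)=f(a)$, or more generally to any policy $\pi_0$ that conditions only on the public state, yields an optimal grounded policy.
   Context: A Dec-POMDP $G$ has states $s$, actions $a$, per-player observation functions $\Omega^i(s)$ (observations $o^i_t$), transition function $\mathcal{T}$, and common reward $R(s,a)$; it is turn-based (only one player acts at each state) and reaches a terminal state after at most $t_{max}$ steps. The AOH of player $i$ at time $t$ is $\tau^i_t=(\Omega^i(s_1),a_1,\dots,a_{t-1},\Omega^i(s_t))$; policies map AOHs to action distributions. $V^{\pi}(\tau)$ is the expected future return when all players play $\pi$ from trajectory $\tau$. The belief induced by $\pi_0$ is $\mathcal{B}_{\pi_0}(\tau\mid\tau^i)=P(\tau\mid\tau^i,\pi_0)$, and $$Q^{\pi_0\to\pi_1}(a\mid\tau^i_t)=\sum_{\tau_t}\mathcal{B}_{\pi_0}(\tau_t\mid\tau^i_t)\Big[R(s_t,a)+\sum_{\tau_{t+1}}\mathcal{T}(\tau_{t+1}\mid\tau_t,a)V^{\pi_1}(\tau_{t+1})\Big].$$ OBL at temperature $0$ from $\pi_0$ produces a policy $\pi_1$ with $\pi_1(\tau^i)\in\arg\max_a Q^{\pi_0\to\pi_1}(a\mid\tau^i)$ at every AOH of an acting player. The grounded belief conditions only on observations, not on partner actions: $$\mathcal{B}_G(\tau\mid\tau^i)=\frac{P(\tau)\prod_t P(o^i_t\mid\tau)}{\sum_{\tau'}P(\tau')\prod_t P(o^i_t\mid\tau')}.$$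 An optimal grounded policy $\pi_G$ plays, at each AOH $\tau^i$, an action maximizing expected return assuming the trajectory at $\tau^i$ is distributed according to $\mathcal{B}_G(\cdot\mid\tau^i)$ and that $\pi_G$ is played by all players thereafter.
   Formalization: The policy $\pi_0$ also gives every action positive probability at every AOH, $\pi_0(a\mid\tau^i)>0$ for all $\tau^i$ and a, so a constant policy $f(a)$ has $f(a)>0$ for every action a. The statement above fails without it. *)

theory Defs
  imports "HOL-Probability.Probability_Mass_Function"
begin

record ('s, 'a, 'o, 'p) decpomdp =
  dp_init     :: "'s pmf"
  dp_trans    :: "'s \<Rightarrow> 'a \<Rightarrow> 's pmf"
  dp_rew      :: "'s \<Rightarrow> 'a \<Rightarrow> real"
  dp_obs      :: "'p \<Rightarrow> 's \<Rightarrow> 'o"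
  dp_actor    :: "'s \<Rightarrow> 'p"
  dp_terminal :: "'s \<Rightarrow> bool"

text \<open>A trajectory (s_1,a_1,...,a_{t-1},s_t) is represented as the list of past
  (state, action) pairs together with the current state.\<close>
type_synonym ('s, 'a) traj = "('s \<times> 'a) list \<times> 's"

type_synonym ('o, 'a) aoh = "('o \<times> 'a) list \<times> 'o"

type_synonym ('p, 'o, 'a) policy = "'p \<Rightarrow> ('o, 'a) aoh \<Rightarrow> 'a pmf"

definition aoh :: "('s,'a,'o,'p,'x) decpomdp_scheme \<Rightarrow> 'p \<Rightarrow> ('s,'a) traj \<Rightarrow> ('o,'a) aoh" where
  "aoh G i \<tau> = (map (\<lambda>(s,a). (dp_obs G i s, a)) (fst \<tau>), dp_obs G i (snd \<tau>))"

definition traj_states :: "('s,'a) traj \<Rightarrow> 's list" where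
  "traj_states \<tau> = map fst (fst \<tau>) @ [snd \<tau>]"

definition traj_prefix :: "('s,'a) traj \<Rightarrow> nat \<Rightarrow> ('s,'a) traj" where
  "traj_prefix \<tau> k = (take k (fst \<tau>), traj_states \<tau> ! k)"

text \<open>Environment probability P(tau) of a trajectory for its given actions
  (initial state and transitions; play stops at terminal states).\<close>
definition penv :: "('s,'a,'o,'p,'x) decpomdp_scheme \<Rightarrow> ('s,'a) traj \<Rightarrow> real" where
  "penv G \<tau> =
     (if (\<forall>x\<in>set (fst \<tau>). \<not> dp_terminal G (fst x))
      then pmf (dp_init G) (hd (traj_states \<tau>)) *
           (\<Prod>k<length (fst \<tau>).
              pmf (dp_trans G (fst (fst \<tau> ! k)) (snd (fst \<tau> ! k))) (traj_states \<tau> ! Suc k))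
      else 0)"

definition ppol :: "('s,'a,'o,'p,'x) decpomdp_scheme \<Rightarrow> ('p,'o,'a) policy \<Rightarrow> ('s,'a) traj \<Rightarrow> real" where
  "ppol G \<pi> \<tau> =
     (\<Prod>k<length (fst \<tau>).
        pmf (\<pi> (dp_actor G (fst (fst \<tau> ! k))) (aoh G (dp_actor G (fst (fst \<tau> ! k))) (traj_prefix \<tau> k)))
            (snd (fst \<tau> ! k)))"

definition trajs :: "nat \<Rightarrow> ('s,'a) traj set" where
  "trajs n = {\<tau>. length (fst \<tau>) = n}"

definition belief_pol ::
  "('s,'a,'o,'p,'x) decpomdp_scheme \<Rightarrow> ('p,'o,'a) policy \<Rightarrow> 'p \<Rightarrow> ('o,'a) aoh \<Rightarrow> ('s,'a) traj \<Rightarrow> real" where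
  "belief_pol G \<pi>0 i h \<tau> =
     (if aoh G i \<tau> = h then penv G \<tau> * ppol G \<pi>0 \<tau> else 0) /
     (\<Sum>\<tau>'\<in>trajs (length (fst h)). if aoh G i \<tau>' = h then penv G \<tau>' * ppol G \<pi>0 \<tau>' else 0)"

text \<open>Grounded belief: conditions only on observations, not on partner actions.\<close>
definition belief_grounded ::
  "('s,'a,'o,'p,'x) decpomdp_scheme \<Rightarrow> 'p \<Rightarrow> ('o,'a) aoh \<Rightarrow> ('s,'a) traj \<Rightarrow> real" where
  "belief_grounded G i h \<tau> =
     (if aoh G i \<tau> = h then penv G \<tau> else 0) /
     (\<Sum>\<tau>'\<in>trajs (length (fst h)). if aoh G i \<tau>' = h then penv G \<tau>' else 0)"

primrec Vf :: "('s::finite,'a::finite,'o,'p,'x) decpomdp_scheme \<Rightarrow> ('p,'o,'a) policy \<Rightarrow> nat \<Rightarrow> ('s,'a) traj \<Rightarrow> real" where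
  "Vf G \<pi> 0 \<tau> = 0"
| "Vf G \<pi> (Suc n) \<tau> =
     (if dp_terminal G (snd \<tau>) then 0
      else (\<Sum>a\<in>UNIV. pmf (\<pi> (dp_actor G (snd \<tau>)) (aoh G (dp_actor G (snd \<tau>)) \<tau>)) a *
              (dp_rew G (snd \<tau>) a +
               (\<Sum>s'\<in>UNIV. pmf (dp_trans G (snd \<tau>) a) s' * Vf G \<pi> n (fst \<tau> @ [(snd \<tau>, a)], s')))))"

definition bounded_length :: "('s,'a,'o,'p,'x) decpomdp_scheme \<Rightarrow> nat \<Rightarrow> bool" where
  "bounded_length G tmax \<longleftrightarrow>
     (\<forall>\<tau>::('s,'a) traj. length (fst \<tau>) = tmax \<longrightarrow> penv G \<tau> > 0 \<longrightarrow> dp_terminal G (snd \<tau>))"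

text \<open>V^pi(tau); tmax steps of fuel suffice in a game of length at most tmax.\<close>
definition V :: "('s::finite,'a::finite,'o,'p,'x) decpomdp_scheme \<Rightarrow> nat \<Rightarrow> ('p,'o,'a) policy \<Rightarrow> ('s,'a) traj \<Rightarrow> real" where
  "V G tmax \<pi> \<tau> = Vf G \<pi> tmax \<tau>"

definition Q_belief ::
  "('s::finite,'a::finite,'o,'p,'x) decpomdp_scheme \<Rightarrow> nat \<Rightarrow> (('s,'a) traj \<Rightarrow> real) \<Rightarrow> ('p,'o,'a) policy
     \<Rightarrow> ('o,'a) aoh \<Rightarrow> 'a \<Rightarrow> real" where
  "Q_belief G tmax B \<pi>1 h a =
     (\<Sum>\<tau>\<in>trajs (length (fst h)). B \<tau> *
        (dp_rew G (snd \<tau>) a +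
         (\<Sum>s'\<in>UNIV. pmf (dp_trans G (snd \<tau>) a) s' * V G tmax \<pi>1 (fst \<tau> @ [(snd \<tau>, a)], s'))))"

definition Q_obl ::
  "('s::finite,'a::finite,'o,'p,'x) decpomdp_scheme \<Rightarrow> nat \<Rightarrow> ('p,'o,'a) policy \<Rightarrow> ('p,'o,'a) policy
     \<Rightarrow> 'p \<Rightarrow> ('o,'a) aoh \<Rightarrow> 'a \<Rightarrow> real" where
  "Q_obl G tmax \<pi>0 \<pi>1 i h a = Q_belief G tmax (belief_pol G \<pi>0 i h) \<pi>1 h a"

definition Q_grounded ::
  "('s::finite,'a::finite,'o,'p,'x) decpomdp_scheme \<Rightarrow> nat \<Rightarrow> ('p,'o,'a) policy
     \<Rightarrow> 'p \<Rightarrow> ('o,'a) aoh \<Rightarrow> 'a \<Rightarrow> real" where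
  "Q_grounded G tmax \<pi> i h a = Q_belief G tmax (belief_grounded G i h) \<pi> h a"

definition acting_aoh :: "('s,'a,'o,'p,'x) decpomdp_scheme \<Rightarrow> 'p \<Rightarrow> ('o,'a) aoh \<Rightarrow> bool" where
  "acting_aoh G i h \<longleftrightarrow>
     (\<exists>\<tau>. aoh G i \<tau> = h \<and> penv G \<tau> > 0 \<and> \<not> dp_terminal G (snd \<tau>) \<and> dp_actor G (snd \<tau>) = i)"

definition obl_temp0 ::
  "('s::finite,'a::finite,'o,'p,'x) decpomdp_scheme \<Rightarrow> nat \<Rightarrow> ('p,'o,'a) policy \<Rightarrow> ('p,'o,'a) policy \<Rightarrow> bool" where
  "obl_temp0 G tmax \<pi>0 \<pi>1 \<longleftrightarrow>
     (\<forall>i h. acting_aoh G i h \<longrightarrow>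
        set_pmf (\<pi>1 i h) \<subseteq> {a. \<forall>b. Q_obl G tmax \<pi>0 \<pi>1 i h b \<le> Q_obl G tmax \<pi>0 \<pi>1 i h a})"

definition optimal_grounded ::
  "('s::finite,'a::finite,'o,'p,'x) decpomdp_scheme \<Rightarrow> nat \<Rightarrow> ('p,'o,'a) policy \<Rightarrow> bool" where
  "optimal_grounded G tmax \<pi> \<longleftrightarrow>
     (\<forall>i h. acting_aoh G i h \<longrightarrow>
        set_pmf (\<pi> i h) \<subseteq> {a. \<forall>b. Q_grounded G tmax \<pi> i h b \<le> Q_grounded G tmax \<pi> i h a})"

definition public_policy ::
  "('s,'a,'o,'p,'x) decpomdp_scheme \<Rightarrow> ('s \<Rightarrow> 'u) \<Rightarrow> ('p,'o,'a) policy \<Rightarrow> bool" where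
  "public_policy G pub \<pi> \<longleftrightarrow>
     (\<exists>g F. (\<forall>i s. pub s = g i (dp_obs G i s)) \<and>
            (\<forall>i h. \<pi> i h = F (map (\<lambda>(o',a). (g i o', a)) (fst h), g i (snd h))))"

definition constant_policy :: "('p,'o,'a) policy \<Rightarrow> bool" where
  "constant_policy \<pi> \<longleftrightarrow> (\<exists>f. \<forall>i h. \<pi> i h = f)"

definition full_support :: "('p,'o,'a) policy \<Rightarrow> bool" where
  "full_support \<pi> \<longleftrightarrow> (\<forall>i h a. pmf (\<pi> i h) a > 0)"

end

theory Submission
  imports Defs
begin

lemma aoh_eq_facts:
  assumes "aoh G i \<tau> = aoh G i \<tau>'"
  shows "map (\<lambda>(s,a). (dp_obs G i s, a)) (fst \<tau>) = map (\<lambda>(s,a). (dp_obs G i s, a)) (fst \<tau>')"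
    and "dp_obs G i (snd \<tau>) = dp_obs G i (snd \<tau>')"
  using assms by (auto simp: aoh_def)

lemma ppol_pos:
  assumes "full_support \<pi>0"
  shows "ppol G \<pi>0 \<tau> > 0"
  unfolding ppol_def by (rule prod_pos) (use assms[unfolded full_support_def] in blast)

lemma ppol_const:
  assumes "constant_policy \<pi>0" "aoh G i \<tau> = aoh G i \<tau>'"
  shows "ppol G \<pi>0 \<tau> = ppol G \<pi>0 \<tau>'"
proof -
  obtain f where f: "\<And>i h. \<pi>0 i h = f" using assms(1) unfolding constant_policy_def by blast
  have m: "map snd (fst \<tau>) = map snd (fst \<tau>')"
  proof -
    have "map snd (map (\<lambda>(s,a). (dp_obs G i s, a)) (fst \<tau>)) = map snd (map (\<lambda>(s,a). (dp_obs G i s, a)) (fst \<tau>'))"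
      using aoh_eq_facts(1)[OF assms(2)] by simp
    then show ?thesis by (simp add: case_prod_beta comp_def)
  qed
  have l: "length (fst \<tau>) = length (fst \<tau>')" using arg_cong[OF m, of length] by simp
  have k: "snd (fst \<tau> ! k) = snd (fst \<tau>' ! k)" if "k < length (fst \<tau>)" for k
    using arg_cong[OF m, of "\<lambda>xs. xs ! k"] l that by simp
  show ?thesis unfolding ppol_def f
    by (rule prod.cong) (simp_all add: l k)
qed

lemma ppol_public:
  fixes G :: "('s,'a,'o,'p,'x) decpomdp_scheme" and pub :: "'s \<Rightarrow> 'u"
    and \<tau> \<tau>' :: "('s,'a) traj"
  assumes "public_policy G pub \<pi>0" "aoh G i \<tau> = aoh G i \<tau>'"
  shows "ppol G \<pi>0 \<tau> = ppol G \<pi>0 \<tau>'"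
proof -
  obtain g F where g: "\<And>i s. pub s = g i (dp_obs G i s)"
    and F: "\<And>i h. \<pi>0 i h = F (map (\<lambda>(o',a). (g i o', a)) (fst h), g i (snd h))"
    using assms(1) unfolding public_policy_def by blast
  define P where "P x = map (\<lambda>(s,a). (pub s, a)) (fst x)" for x :: "('s,'a) traj"
  define S where "S x = map pub (traj_states x)" for x :: "('s,'a) traj"
  have factor: "pmf (\<pi>0 (dp_actor G (fst (fst \<tau>0 ! k))) (aoh G (dp_actor G (fst (fst \<tau>0 ! k))) (traj_prefix \<tau>0 k)))
            (snd (fst \<tau>0 ! k)) = pmf (F (take k (P \<tau>0), S \<tau>0 ! k)) (snd (P \<tau>0 ! k))"
    if "k < length (fst \<tau>0)" for \<tau>0 k
  proof -
    let ?j = "dp_actor G (fst (fst \<tau>0 ! k))"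
    have "map (\<lambda>(o',a). (g ?j o', a)) (fst (aoh G ?j (traj_prefix \<tau>0 k))) = take k (P \<tau>0)"
      by (simp add: aoh_def traj_prefix_def P_def take_map g[symmetric] case_prod_beta comp_def)
    moreover have "g ?j (snd (aoh G ?j (traj_prefix \<tau>0 k))) = S \<tau>0 ! k"
      using that by (simp add: aoh_def traj_prefix_def S_def g[symmetric] traj_states_def nth_append)
    moreover have "snd (P \<tau>0 ! k) = snd (fst \<tau>0 ! k)"
      using that by (simp add: P_def case_prod_beta)
    ultimately show ?thesis by (simp add: F)
  qed
  have PE: "P \<tau> = P \<tau>'"
  proof -
    have "map (\<lambda>(o',a). (g i o', a)) (map (\<lambda>(s,a). (dp_obs G i s, a)) (fst \<tau>))
        = map (\<lambda>(o',a). (g i o', a)) (map (\<lambda>(s,a). (dp_obs G i s, a)) (fst \<tau>'))"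
      using aoh_eq_facts(1)[OF assms(2)] by simp
    moreover have "map (\<lambda>(o',a). (g i o', a)) (map (\<lambda>(s,a). (dp_obs G i s, a)) xs) = map (\<lambda>(s,a). (pub s, a)) xs" for xs :: "('s \<times> 'a) list"
      by (induction xs) (auto simp: g[of _ i])
    ultimately show ?thesis unfolding P_def by metis
  qed
  have SE: "S \<tau> = S \<tau>'"
  proof -
    have "map fst (map (\<lambda>(s,a). (dp_obs G i s, a)) (fst \<tau>))
        = map fst (map (\<lambda>(s,a). (dp_obs G i s, a)) (fst \<tau>'))"
      using aoh_eq_facts(1)[OF assms(2)] by simp
    then have "map (g i) (map fst (map (\<lambda>(s,a). (dp_obs G i s, a)) (fst \<tau>)))
        = map (g i) (map fst (map (\<lambda>(s,a). (dp_obs G i s, a)) (fst \<tau>')))" by simp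
    then have "map pub (map fst (fst \<tau>)) = map pub (map fst (fst \<tau>'))"
      by (simp add: case_prod_beta comp_def g[of _ i])
    moreover have "pub (snd \<tau>) = pub (snd \<tau>')"
      using aoh_eq_facts(2)[OF assms(2)] g[of _ i] by metis
    ultimately show ?thesis by (simp add: S_def traj_states_def)
  qed
  have l: "length (fst \<tau>) = length (fst \<tau>')" using arg_cong[OF PE, of length] by (simp add: P_def)
  show ?thesis unfolding ppol_def
  proof (rule prod.cong)
    show "{..<length (fst \<tau>)} = {..<length (fst \<tau>')}" using l by simp
  next
    fix k assume "k \<in> {..<length (fst \<tau>')}"
    then have k1: "k < length (fst \<tau>)" and k2: "k < length (fst \<tau>')" using l by auto
    show "pmf (\<pi>0 (dp_actor G (fst (fst \<tau> ! k))) (aoh G (dp_actor G (fst (fst \<tau> ! k))) (traj_prefix \<tau> k)))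
            (snd (fst \<tau> ! k)) = pmf (\<pi>0 (dp_actor G (fst (fst \<tau>' ! k))) (aoh G (dp_actor G (fst (fst \<tau>' ! k))) (traj_prefix \<tau>' k)))
            (snd (fst \<tau>' ! k))"
      unfolding factor[OF k1] factor[OF k2] PE SE ..
  qed
qed

lemma belief_eq:
  assumes H: "\<And>\<tau>'. aoh G i \<tau>' = h \<Longrightarrow> ppol G \<pi>0 \<tau>' = c" and c: "c > 0"
  shows "belief_pol G \<pi>0 i h \<tau> = belief_grounded G i h \<tau>"
proof -
  have e: "(if aoh G i \<tau>' = h then penv G \<tau>' * ppol G \<pi>0 \<tau>' else 0)
         = c * (if aoh G i \<tau>' = h then penv G \<tau>' else 0)" for \<tau>'
    using H by auto
  have s: "(\<Sum>\<tau>'\<in>A. c * f \<tau>') = c * (\<Sum>\<tau>'\<in>A. f \<tau>')" for A and f :: "_ \<Rightarrow> real"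
    by (rule sum_distrib_left[symmetric])
  have d: "(c * x) / (c * y) = x / y" for x y :: real
    using c by simp
  show ?thesis unfolding belief_pol_def belief_grounded_def e s d ..
qed

theorem theorem4:
  fixes G :: "('s::finite, 'a::finite, 'o::finite, 'p) decpomdp"
    and tmax :: nat
    and pub :: "'s \<Rightarrow> 'u"
    and \<pi>0 \<pi>1 :: "('p, 'o, 'a) policy"
  assumes "bounded_length G tmax"
    and "constant_policy \<pi>0 \<or> public_policy G pub \<pi>0"
    and "full_support \<pi>0"
    and "obl_temp0 G tmax \<pi>0 \<pi>1"
  shows "optimal_grounded G tmax \<pi>1"
proof -
  have same: "ppol G \<pi>0 \<tau> = ppol G \<pi>0 \<tau>'" if "aoh G i \<tau> = aoh G i \<tau>'" for i \<tau> \<tau>'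
    using assms(2) ppol_const[OF _ that] ppol_public[OF _ that] by blast
  have B: "belief_pol G \<pi>0 i h = belief_grounded G i h" for i h
  proof
    fix \<tau>
    show "belief_pol G \<pi>0 i h \<tau> = belief_grounded G i h \<tau>"
    proof (cases "\<exists>\<tau>0. aoh G i \<tau>0 = h")
      case True
      then obtain \<tau>0 where t0: "aoh G i \<tau>0 = h" by blast
      show ?thesis
      proof (rule belief_eq[of G i h \<pi>0 "ppol G \<pi>0 \<tau>0"])
        fix \<tau>' assume "aoh G i \<tau>' = h"
        then show "ppol G \<pi>0 \<tau>' = ppol G \<pi>0 \<tau>0" using same t0 by metis
      next
        show "ppol G \<pi>0 \<tau>0 > 0" by (rule ppol_pos[OF assms(3)])
      qed
    next
      case False
      show ?thesis by (rule belief_eq[of G i h \<pi>0 1]) (use False in blast, simp)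
    qed
  qed
  have "Q_obl G tmax \<pi>0 \<pi>1 i h = Q_grounded G tmax \<pi>1 i h" for i h
    unfolding Q_obl_def Q_grounded_def B ..
  then show ?thesis using assms(4) unfolding obl_temp0_def optimal_grounded_def by presburger
qed

end
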